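(* For every positive integer $t$, $md_t \geq \left\lceil \frac{t+1}{2} \right\rceil$. Equivalently, for every voter matrix $V$ with $t$ topics there is a proposal supported by $V$ that contains at least $\lceil (t+1)/2\rceil$ entries $Y$.
   Context: Let $t$ be a positive integer (the number of topics). A voter matrix with $t$ topics is a matrix $V\in\{Y,N\}^{n\times t}$ for some positive integer $n$ (the number of voters; rows are voters), subject to the standing assumption that in every column the number of entries $Y$ is at least the number of entries $N$ (so $Y$ is the majority opinion on every topic). $\mathcal{V}_t$ denotes the set of all voter matrices with $t$ topics and any number of voters. A proposal is a vector $p\in\{Y,N\}^t$. A voter (row) $v$ supports $p$ if the Hamming distance between $v$ and $p$ is at most $t/2$. A proposal $p$ is supported by $V$ if at least $n/2$ of the rows of $V$ support $p$. The number of majority decisions of a proposal is the number of topics on which it agrees with the majority opinion, i.e. its number of entries $Y$. For $V$, $md_V$ is the maximum number $m$ such that there exists a proposal supported by $V$ with $m$ majority decisions, and $md_t=\min_{V\in\mathcal{V}_t} md_V$. *)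

theory Defs
  imports Complex_Main
begin

text \<open>A voter matrix with n voters and t topics is encoded as V :: nat => nat => bool,
  where V i j = True means entry Y (voter i, topic j), for i < n and j < t.
  Proposals are p :: nat => bool, only p j for j < t matters (True = Y).\<close>

definition voter_matrix :: "nat \<Rightarrow> nat \<Rightarrow> (nat \<Rightarrow> nat \<Rightarrow> bool) \<Rightarrow> bool" where
  "voter_matrix n t V \<longleftrightarrow> n \<ge> 1 \<and>
     (\<forall>j<t. card {i. i < n \<and> \<not> V i j} \<le> card {i. i < n \<and> V i j})"

definition hamming :: "nat \<Rightarrow> (nat \<Rightarrow> bool) \<Rightarrow> (nat \<Rightarrow> bool) \<Rightarrow> nat" where
  "hamming t v p = card {j. j < t \<and> v j \<noteq> p j}"

definition supports :: "nat \<Rightarrow> (nat \<Rightarrow> bool) \<Rightarrow> (nat \<Rightarrow> bool) \<Rightarrow> bool" where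
  "supports t v p \<longleftrightarrow> real (hamming t v p) \<le> real t / 2"

definition supported :: "nat \<Rightarrow> nat \<Rightarrow> (nat \<Rightarrow> nat \<Rightarrow> bool) \<Rightarrow> (nat \<Rightarrow> bool) \<Rightarrow> bool" where
  "supported n t V p \<longleftrightarrow> real (card {i. i < n \<and> supports t (V i) p}) \<ge> real n / 2"

definition majority_decisions :: "nat \<Rightarrow> (nat \<Rightarrow> bool) \<Rightarrow> nat" where
  "majority_decisions t p = card {j. j < t \<and> p j}"

definition md_V :: "nat \<Rightarrow> nat \<Rightarrow> (nat \<Rightarrow> nat \<Rightarrow> bool) \<Rightarrow> nat" where
  "md_V n t V = Max {majority_decisions t p | p. supported n t V p}"

definition md :: "nat \<Rightarrow> nat" where
  "md t = Inf {md_V n t V | n V. voter_matrix n t V}"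

end

theory Submission
  imports Defs
begin

lemma supports_iff: "supports t v p \<longleftrightarrow> 2 * hamming t v p \<le> t"
  unfolding supports_def by linarith

lemma ham_split:
  assumes "j < t" "P \<subseteq> {..<t} - {j}"
  shows "hamming t v (\<lambda>i. i \<in> P) = card {i \<in> {..<t} - {j}. v i \<noteq> (i \<in> P)} + (if v j then 1 else 0)"
    and "hamming t v (\<lambda>i. i \<in> insert j P) = card {i \<in> {..<t} - {j}. v i \<noteq> (i \<in> P)} + (if v j then 0 else 1)"
proof -
  let ?D = "{i \<in> {..<t} - {j}. v i \<noteq> (i \<in> P)}"
  have jP: "j \<notin> P" using assms by auto
  have e1: "{i. i < t \<and> v i \<noteq> (i \<in> P)} = ?D \<union> (if v j then {j} else {})"
    using assms jP by auto
  have e2: "{i. i < t \<and> v i \<noteq> (i \<in> insert j P)} = ?D \<union> (if v j then {} else {j})"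
    using assms jP by auto
  show "hamming t v (\<lambda>i. i \<in> P) = card ?D + (if v j then 1 else 0)"
    unfolding hamming_def e1 by (auto simp: card_insert_if)
  show "hamming t v (\<lambda>i. i \<in> insert j P) = card ?D + (if v j then 0 else 1)"
    unfolding hamming_def e2 by (auto simp: card_insert_if)
qed

lemma count_D:
  assumes "finite T"
  shows "card {P \<in> Pow T. card {i \<in> T. v i \<noteq> (i \<in> P)} = m} = card T choose m"
proof -
  define D where "D P = {i \<in> T. v i \<noteq> (i \<in> P)}" for P
  have "bij_betw D {P \<in> Pow T. card (D P) = m} {B. B \<subseteq> T \<and> card B = m}"
  proof -
    have inv: "D (D P) = P" if "P \<subseteq> T" for P using that by (auto simp: D_def)
    show ?thesis
      by (rule bij_betw_byWitness[where f'=D]) (use inv in \<open>auto simp: D_def\<close>)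
  qed
  then have "card {P \<in> Pow T. card (D P) = m} = card {B. B \<subseteq> T \<and> card B = m}"
    by (rule bij_betw_same_card)
  also have "\<dots> = card T choose m" using n_subsets[OF assms] .
  finally show ?thesis unfolding D_def .
qed

lemma sum_pm1:
  assumes "Q \<subseteq> {..<t}"
  shows "(\<Sum>j<t. if j \<in> Q then 1 else -1 :: int) = 2 * int (card Q) - int t"
proof -
  have f: "finite Q" using assms finite_subset by blast
  have "(\<Sum>j<t. if j \<in> Q then 1 else -1 :: int) = int (card ({..<t} \<inter> {j. j \<in> Q})) - int (card ({..<t} \<inter> - {j. j \<in> Q}))"
    by (simp add: sum.If_cases)
  also have "{..<t} \<inter> {j. j \<in> Q} = Q" using assms by auto
  also have "{..<t} \<inter> - {j. j \<in> Q} = {..<t} - Q" by auto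
  also have "card ({..<t} - Q) = t - card Q" using assms f by (simp add: card_Diff_subset)
  finally show ?thesis using card_mono[OF _ assms] by simp
qed

lemma sum_ind: "finite A \<Longrightarrow> (\<Sum>x\<in>A. if P x then 1 else 0 :: int) = int (card {x\<in>A. P x})"
  by (simp add: sum.If_cases Int_def conj_commute)

lemma inner_j:
  assumes t: "t = 2*m+1" and j: "j < t"
  shows "(\<Sum>Q\<in>Pow {..<t}. if supports t v (\<lambda>i. i\<in>Q) then (if j \<in> Q then 1 else -1) else 0 :: int)
     = (if v j then 1 else -1) * int ((2*m) choose m)"
proof -
  define T' where "T' = {..<t} - {j}"
  define G where "G Q = (if supports t v (\<lambda>i. i\<in>Q) then (if j \<in> Q then 1 else -1) else 0 :: int)" for Q
  define d where "d P = card {i \<in> T'. v i \<noteq> (i \<in> P)}" for P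
  have fT: "finite T'" by (simp add: T'_def)
  have jT: "j \<notin> T'" by (simp add: T'_def)
  have TT: "{..<t} = insert j T'" using j by (auto simp: T'_def)
  have PP: "Pow {..<t} = Pow T' \<union> insert j ` Pow T'" unfolding TT by (rule Pow_insert)
  have disj: "Pow T' \<inter> insert j ` Pow T' = {}" using jT by auto
  have inj: "inj_on (insert j) (Pow T')"
  proof (rule inj_onI)
    fix x y assume "x \<in> Pow T'" "y \<in> Pow T'" "insert j x = insert j y"
    then show "x = y" using jT by (metis Diff_insert_absorb PowD in_mono)
  qed
  have "(\<Sum>Q\<in>Pow {..<t}. G Q) = (\<Sum>P\<in>Pow T'. G P) + (\<Sum>Q\<in>insert j ` Pow T'. G Q)"
    unfolding PP by (rule sum.union_disjoint) (use fT disj in auto)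
  also have "(\<Sum>Q\<in>insert j ` Pow T'. G Q) = (\<Sum>P\<in>Pow T'. G (insert j P))"
    by (rule sum.reindex[OF inj, unfolded comp_def])
  also have "(\<Sum>P\<in>Pow T'. G P) + (\<Sum>P\<in>Pow T'. G (insert j P)) = (\<Sum>P\<in>Pow T'. (if v j then 1 else -1) * (if d P = m then 1 else 0))"
    unfolding sum.distrib[symmetric]
  proof (rule sum.cong[OF refl])
    fix P assume "P \<in> Pow T'"
    then have PT: "P \<subseteq> {..<t} - {j}" by (simp add: T'_def)
    have jP: "j \<notin> P" using PT by auto
    have h1: "hamming t v (\<lambda>i. i \<in> P) = d P + (if v j then 1 else 0)"
      using ham_split(1)[OF j PT] by (simp add: d_def T'_def)
    have h2: "hamming t v (\<lambda>i. i \<in> insert j P) = d P + (if v j then 0 else 1)"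
      using ham_split(2)[OF j PT] by (simp add: d_def T'_def)
    show "G P + G (insert j P) = (if v j then 1 else -1) * (if d P = m then 1 else 0)"
      unfolding G_def supports_iff h1 h2 using jP t by auto
  qed
  also have "\<dots> = (if v j then 1 else -1) * (\<Sum>P\<in>Pow T'. (if d P = m then 1 else 0))"
    by (simp add: sum_distrib_left)
  also have "(\<Sum>P\<in>Pow T'. (if d P = m then 1 else 0 :: int)) = int (card {P \<in> Pow T'. d P = m})"
    using fT by (simp add: sum_ind)
  also have "card {P \<in> Pow T'. d P = m} = card T' choose m"
    unfolding d_def by (rule count_D[OF fT])
  also have "card T' = 2*m" using j t by (simp add: T'_def)
  finally show ?thesis unfolding G_def .
qed

lemma voter_identity:
  assumes t: "t = 2*m+1"
  shows "(\<Sum>Q\<in>Pow {..<t}. if supports t v (\<lambda>i. i\<in>Q) then 2 * int (card Q) - int t else 0)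
     = int ((2*m) choose m) * (2 * int (card {j. j < t \<and> v j}) - int t)"
proof -
  have "(\<Sum>Q\<in>Pow {..<t}. if supports t v (\<lambda>i. i\<in>Q) then 2 * int (card Q) - int t else 0)
      = (\<Sum>Q\<in>Pow {..<t}. \<Sum>j<t. if supports t v (\<lambda>i. i\<in>Q) then (if j \<in> Q then 1 else -1) else 0)"
    by (rule sum.cong[OF refl]) (auto simp: sum_pm1)
  also have "\<dots> = (\<Sum>j<t. \<Sum>Q\<in>Pow {..<t}. if supports t v (\<lambda>i. i\<in>Q) then (if j \<in> Q then 1 else -1) else 0)"
    by (rule sum.swap)
  also have "\<dots> = (\<Sum>j<t. (if v j then 1 else -1) * int ((2*m) choose m))"
    by (rule sum.cong[OF refl]) (simp add: inner_j[OF t])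
  also have "\<dots> = int ((2*m) choose m) * (\<Sum>j<t. if j \<in> {j. j < t \<and> v j} then 1 else -1)"
    by (simp add: sum_distrib_left mult.commute)
  also have "(\<Sum>j<t. if j \<in> {j. j < t \<and> v j} then 1 else -1 :: int) = 2 * int (card {j. j < t \<and> v j}) - int t"
    by (rule sum_pm1) auto
  finally show ?thesis .
qed

lemma card_split: "card {i. i < n \<and> P i} + card {i. i < n \<and> \<not> P i} = n"
proof -
  have "card ({i. i < n \<and> P i} \<union> {i. i < n \<and> \<not> P i}) = card {i. i < n \<and> P i} + card {i. i < n \<and> \<not> P i}"
    by (rule card_Un_disjoint) auto
  moreover have "{i. i < n \<and> P i} \<union> {i. i < n \<and> \<not> P i} = {..<n}" by auto
  ultimately show ?thesis by simp
qed

lemma supports_compl: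
  assumes "odd t"
  shows "supports t v (\<lambda>j. j \<in> {..<t} - Q) \<longleftrightarrow> \<not> supports t v (\<lambda>j. j \<in> Q)"
proof -
  have e: "{j. j < t \<and> v j \<noteq> (j \<in> {..<t} - Q)} = {..<t} - {j. j < t \<and> v j \<noteq> (j \<in> Q)}" by auto
  have "hamming t v (\<lambda>j. j \<in> {..<t} - Q) = t - hamming t v (\<lambda>j. j \<in> Q)"
    unfolding hamming_def e by (subst card_Diff_subset) auto
  moreover have "hamming t v (\<lambda>j. j \<in> Q) \<le> t"
    unfolding hamming_def by (rule order_trans[OF card_mono[of "{..<t}"]]) auto
  ultimately show ?thesis using assms unfolding supports_iff by presburger
qed

lemma core_odd:
  assumes t: "t = 2*m+1"
    and col: "\<forall>j<t. card {i. i < n \<and> \<not> V i j} \<le> card {i. i < n \<and> V i j}"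
  shows "\<exists>Q\<subseteq>{..<t}. m + 1 \<le> card Q \<and> n \<le> 2 * card {i. i < n \<and> supports t (V i) (\<lambda>j. j \<in> Q)}"
proof (rule ccontr)
  assume H: "\<not> ?thesis"
  define S where "S Q = card {i. i < n \<and> supports t (V i) (\<lambda>j. j \<in> Q)}" for Q
  define C where "C = int ((2*m) choose m)"
  have C0: "C \<ge> 0" by (simp add: C_def)
  have SI: "int (S Q) = (\<Sum>i<n. if supports t (V i) (\<lambda>j. j \<in> Q) then 1 else 0)" for Q
    by (simp add: sum_ind S_def lessThan_def)
  have A: "(\<Sum>Q\<in>Pow {..<t}. (2 * int (card Q) - int t) * int (S Q))
      = C * (\<Sum>i<n. 2 * int (card {j. j < t \<and> V i j}) - int t)"
  proof -
    have "(\<Sum>Q\<in>Pow {..<t}. (2 * int (card Q) - int t) * int (S Q))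
       = (\<Sum>Q\<in>Pow {..<t}. \<Sum>i<n. if supports t (V i) (\<lambda>j. j \<in> Q) then 2 * int (card Q) - int t else 0)"
      unfolding SI sum_distrib_left by (rule sum.cong[OF refl], rule sum.cong[OF refl]) simp
    also have "\<dots> = (\<Sum>i<n. \<Sum>Q\<in>Pow {..<t}. if supports t (V i) (\<lambda>j. j \<in> Q) then 2 * int (card Q) - int t else 0)"
      by (rule sum.swap)
    also have "\<dots> = (\<Sum>i<n. C * (2 * int (card {j. j < t \<and> V i j}) - int t))"
      unfolding C_def by (rule sum.cong[OF refl]) (rule voter_identity[OF t])
    finally show ?thesis by (simp add: sum_distrib_left)
  qed
  have B: "(\<Sum>i<n. 2 * int (card {j. j < t \<and> V i j}) - int t) \<ge> 0"
  proof -
    have "(\<Sum>i<n. 2 * int (card {j. j < t \<and> V i j}) - int t) = (\<Sum>i<n. \<Sum>j<t. if V i j then 1 else -1)"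
      by (rule sum.cong[OF refl]) (subst sum_pm1[symmetric], auto)
    also have "\<dots> = (\<Sum>j<t. \<Sum>i<n. if V i j then 1 else -1)" by (rule sum.swap)
    also have "\<dots> \<ge> 0"
    proof (rule sum_nonneg)
      fix j assume "j \<in> {..<t}"
      then have cj: "card {i. i < n \<and> \<not> V i j} \<le> card {i. i < n \<and> V i j}" using col by auto
      have "(\<Sum>i<n. if V i j then 1 else -1 :: int) = int (card ({..<n} \<inter> {i. V i j})) - int (card ({..<n} \<inter> - {i. V i j}))"
        by (simp add: sum.If_cases)
      also have "{..<n} \<inter> {i. V i j} = {i. i < n \<and> V i j}" by auto
      also have "{..<n} \<inter> - {i. V i j} = {i. i < n \<and> \<not> V i j}" by auto
      finally show "0 \<le> (\<Sum>i<n. if V i j then 1 else -1 :: int)" using cj by simp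
    qed
    finally show ?thesis .
  qed
  have Z: "(\<Sum>Q\<in>Pow {..<t}. 2 * int (card Q) - int t) = 0"
  proof -
    have "(\<Sum>Q\<in>Pow {..<t}. 2 * int (card Q) - int t) = (\<Sum>Q\<in>Pow {..<t}. 2 * int (card ({..<t} - Q)) - int t)"
      by (rule sum.reindex_bij_witness[of _ "\<lambda>Q. {..<t} - Q" "\<lambda>Q. {..<t} - Q"]) (auto simp: double_diff)
    also have "\<dots> = (\<Sum>Q\<in>Pow {..<t}. - (2 * int (card Q) - int t))"
    proof (rule sum.cong[OF refl])
      fix Q assume "Q \<in> Pow {..<t}"
      then have "card ({..<t} - Q) = t - card Q" "card Q \<le> t"
        using card_mono[of "{..<t}" Q] by (auto simp: card_Diff_subset finite_subset)
      then show "2 * int (card ({..<t} - Q)) - int t = - (2 * int (card Q) - int t)" by simp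
    qed
    finally have "(\<Sum>Q\<in>Pow {..<t}. 2 * int (card Q) - int t) = - (\<Sum>Q\<in>Pow {..<t}. 2 * int (card Q) - int t)"
      unfolding sum_negf .
    then show ?thesis by linarith
  qed
  have Comp: "S ({..<t} - Q) + S Q = n" for Q
  proof -
    have "S ({..<t} - Q) = card {i. i < n \<and> \<not> supports t (V i) (\<lambda>j. j \<in> Q)}"
      unfolding S_def using supports_compl[of t] t by simp
    then show ?thesis unfolding S_def using card_split by (metis add.commute)
  qed
  have neg: "(2 * int (card Q) - int t) * (2 * int (S Q) - int n) < 0" if Q: "Q \<in> Pow {..<t}" for Q
  proof (cases "m + 1 \<le> card Q")
    case True
    then have "2 * S Q < n" using H Q by (auto simp: S_def)
    then show ?thesis using True t by (simp add: mult_pos_neg)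
  next
    case False
    have "card ({..<t} - Q) = t - card Q" "card Q \<le> t"
      using Q card_mono[of "{..<t}" Q] by (auto simp: card_Diff_subset finite_subset)
    then have "m + 1 \<le> card ({..<t} - Q)" using False t by simp
    then have "2 * S ({..<t} - Q) < n" using H by (auto simp: S_def)
    then have "2 * S Q > n" using Comp[of Q] by simp
    then show ?thesis using False t by (simp add: mult_neg_pos)
  qed
  have "(\<Sum>Q\<in>Pow {..<t}. (2 * int (card Q) - int t) * (2 * int (S Q) - int n)) < 0"
  proof -
    have "0 < (\<Sum>Q\<in>Pow {..<t}. - ((2 * int (card Q) - int t) * (2 * int (S Q) - int n)))"
      by (rule sum_pos) (use neg in auto)
    then show ?thesis by (simp add: sum_negf)
  qed
  moreover have "(\<Sum>Q\<in>Pow {..<t}. (2 * int (card Q) - int t) * (2 * int (S Q) - int n))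
     = 2 * (\<Sum>Q\<in>Pow {..<t}. (2 * int (card Q) - int t) * int (S Q)) - int n * (\<Sum>Q\<in>Pow {..<t}. 2 * int (card Q) - int t)"
  proof -
    have "(\<Sum>Q\<in>Pow {..<t}. (2 * int (card Q) - int t) * (2 * int (S Q) - int n))
       = (\<Sum>Q\<in>Pow {..<t}. 2 * ((2 * int (card Q) - int t) * int (S Q)) - int n * (2 * int (card Q) - int t))"
      by (rule sum.cong[OF refl]) (simp add: algebra_simps)
    also have "\<dots> = (\<Sum>Q\<in>Pow {..<t}. 2 * ((2 * int (card Q) - int t) * int (S Q))) - (\<Sum>Q\<in>Pow {..<t}. int n * (2 * int (card Q) - int t))"
      by (rule sum_subtractf)
    also have "\<dots> = 2 * (\<Sum>Q\<in>Pow {..<t}. (2 * int (card Q) - int t) * int (S Q)) - int n * (\<Sum>Q\<in>Pow {..<t}. 2 * int (card Q) - int t)"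
      by (simp only: sum_distrib_left)
    finally show ?thesis .
  qed
  moreover have "0 \<le> C * (\<Sum>i<n. 2 * int (card {j. j < t \<and> V i j}) - int t)"
    using B C0 by simp
  ultimately show False using A Z by simp
qed

lemma core_all:
  assumes t1: "t \<ge> 1"
    and col: "\<forall>j<t. card {i. i < n \<and> \<not> V i j} \<le> card {i. i < n \<and> V i j}"
  shows "\<exists>Q\<subseteq>{..<t}. t div 2 + 1 \<le> card Q \<and> n \<le> 2 * card {i. i < n \<and> supports t (V i) (\<lambda>j. j \<in> Q)}"
proof (cases "odd t")
  case True
  then obtain m where t: "t = 2*m+1" by (metis oddE)
  show ?thesis using core_odd[OF t col] t by simp
next
  case False
  then obtain m where t: "t = 2*m" by blast
  with t1 have m1: "m \<ge> 1" by simp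
  have t': "t - 1 = 2*(m-1)+1" using t m1 by simp
  have col': "\<forall>j<t-1. card {i. i < n \<and> \<not> V i j} \<le> card {i. i < n \<and> V i j}" using col by simp
  obtain Q' where Q': "Q' \<subseteq> {..<t-1}" "m - 1 + 1 \<le> card Q'"
    and S': "n \<le> 2 * card {i. i < n \<and> supports (t-1) (V i) (\<lambda>j. j \<in> Q')}"
    using core_odd[OF t' col'] by blast
  define Q where "Q = insert (t-1) Q'"
  have fQ': "finite Q'" using Q'(1) finite_subset by blast
  have nin: "t - 1 \<notin> Q'" using Q'(1) by auto
  have cQ: "card Q = card Q' + 1" unfolding Q_def using fQ' nin by simp
  have QT: "Q \<subseteq> {..<t}" unfolding Q_def using Q'(1) t m1 by auto
  have sup: "supports t v (\<lambda>j. j \<in> Q)" if "supports (t-1) v (\<lambda>j. j \<in> Q')" for v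
  proof -
    have "{j. j < t \<and> v j \<noteq> (j \<in> Q)} \<subseteq> insert (t-1) {j. j < t - 1 \<and> v j \<noteq> (j \<in> Q')}"
      unfolding Q_def by auto
    then have "hamming t v (\<lambda>j. j \<in> Q) \<le> card (insert (t-1) {j. j < t - 1 \<and> v j \<noteq> (j \<in> Q')})"
      unfolding hamming_def by (rule card_mono[rotated]) simp
    also have "\<dots> \<le> hamming (t-1) v (\<lambda>j. j \<in> Q') + 1"
      unfolding hamming_def by (simp add: card_insert_le_m1 card_insert_if)
    finally show ?thesis using that t m1 unfolding supports_iff by simp
  qed
  have "card {i. i < n \<and> supports (t-1) (V i) (\<lambda>j. j \<in> Q')} \<le> card {i. i < n \<and> supports t (V i) (\<lambda>j. j \<in> Q)}"
    by (rule card_mono) (auto intro: sup)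
  then show ?thesis using QT cQ Q'(2) S' t m1 by (intro exI[of _ Q]) auto
qed

lemma ceil_K: "nat \<lceil>(real t + 1) / 2\<rceil> = t div 2 + 1"
proof -
  have "\<lceil>(real t + 1) / 2\<rceil> = int (t div 2 + 1)"
  proof (rule ceiling_unique)
    show "real_of_int (int (t div 2 + 1)) - 1 < (real t + 1) / 2"
      by (cases "even t") (auto elim!: evenE oddE)
    show "(real t + 1) / 2 \<le> real_of_int (int (t div 2 + 1))"
      by (cases "even t") (auto elim!: evenE oddE)
  qed
  then show ?thesis by simp
qed

theorem theorem4p6:
  fixes t :: nat
  assumes "t \<ge> 1"
  shows "md t \<ge> nat \<lceil>(real t + 1) / 2\<rceil>"
proof -
  have bound: "t div 2 + 1 \<le> md_V n t V" if vm: "voter_matrix n t V" for n V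
  proof -
    have col: "\<forall>j<t. card {i. i < n \<and> \<not> V i j} \<le> card {i. i < n \<and> V i j}"
      using vm unfolding voter_matrix_def by blast
    obtain Q where Q: "Q \<subseteq> {..<t}" "t div 2 + 1 \<le> card Q"
      and S: "n \<le> 2 * card {i. i < n \<and> supports t (V i) (\<lambda>j. j \<in> Q)}"
      using core_all[OF assms col] by blast
    define M where "M = {majority_decisions t p | p. supported n t V p}"
    have fin: "finite M"
    proof (rule finite_subset)
      have "card {j. j < t \<and> p j} \<le> t" for p
        using card_mono[of "{..<t}" "{j. j < t \<and> p j}"] by auto
      then show "M \<subseteq> {..t}" unfolding M_def majority_decisions_def by auto
    qed simp
    have "supported n t V (\<lambda>j. j \<in> Q)" unfolding supported_def using S by simp
    moreover have "majority_decisions t (\<lambda>j. j \<in> Q) = card Q"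
      unfolding majority_decisions_def proof -
      have "{j. j < t \<and> j \<in> Q} = Q" using Q(1) by auto
      then show "card {j. j < t \<and> j \<in> Q} = card Q" by simp
    qed
    ultimately have "card Q \<in> M" unfolding M_def by (metis (mono_tags, lifting) mem_Collect_eq)
    then have "card Q \<le> Max M" using fin by simp
    then show ?thesis using Q(2) unfolding md_V_def M_def by simp
  qed
  have ne: "{md_V n t V | n V. voter_matrix n t V} \<noteq> {}"
  proof -
    have "voter_matrix 1 t (\<lambda>i j. True)" unfolding voter_matrix_def by simp
    then show ?thesis by blast
  qed
  have "t div 2 + 1 \<le> md t" unfolding md_def
    by (rule cInf_greatest[OF ne]) (use bound in blast)
  then show ?thesis by (simp add: ceil_K)
qed

end
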